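(* Let $0<\epsilon<1/3$. Suppose $H=(X^1\cup X^2\cup X^3,E)$ is a $3$-partite $3$-graph, $D_1,D_2,D_3\subseteq V(H)$, and $(D_1,D_2,D_3)$ is an $\epsilon$-regular triple in $H$. Then one of the following holds: (1) $d_H(D_1,D_2,D_3)\leq\epsilon$; or (2) there are pairwise distinct $f(1),f(2),f(3)\in\{1,2,3\}$ such that $|D_i\cap X^{f(i)}|\geq(1-2\epsilon)|D_i|$ for each $i\in\{1,2,3\}$.
   Context: A $3$-graph $H=(V,E)$ is $3$-partite with partition $V=X^1\cup X^2\cup X^3$ if every edge meets each $X^i$ in at most one vertex. For nonempty $X,Y,Z\subseteq V$, $d_H(X,Y,Z)=|\{(x,y,z)\in X\times Y\times Z:\{x,y,z\}\in E\}|/(|X||Y||Z|)$. A triple $(X,Y,Z)$ is $\epsilon$-regular in $H$ if for all $X'\subseteq X,Y'\subseteq Y,Z'\subseteq Z$ with $|X'|\ge\epsilon|X|,|Y'|\ge\epsilon|Y|,|Z'|\ge\epsilon|Z|$, $|d_H(X,Y,Z)-d_H(X',Y',Z')|\le\epsilon$. *)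

theory Defs
  imports Complex_Main
begin

definition three_graph :: "'a set \<Rightarrow> 'a set set \<Rightarrow> bool" where
  "three_graph V E \<longleftrightarrow> finite V \<and> (\<forall>e\<in>E. e \<subseteq> V \<and> card e = 3)"

definition three_partite :: "'a set \<Rightarrow> 'a set set \<Rightarrow> (nat \<Rightarrow> 'a set) \<Rightarrow> bool" where
  "three_partite V E X \<longleftrightarrow> three_graph V E \<and> V = X 1 \<union> X 2 \<union> X 3 \<and>
     X 1 \<inter> X 2 = {} \<and> X 1 \<inter> X 3 = {} \<and> X 2 \<inter> X 3 = {} \<and>
     (\<forall>e\<in>E. \<forall>i\<in>{1,2,3}. card (e \<inter> X i) \<le> 1)"

definition density :: "'a set set \<Rightarrow> 'a set \<Rightarrow> 'a set \<Rightarrow> 'a set \<Rightarrow> real" where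
  "density E A B C =
     real (card {(x,y,z). x \<in> A \<and> y \<in> B \<and> z \<in> C \<and> {x,y,z} \<in> E})
     / (real (card A) * real (card B) * real (card C))"

definition eps_regular :: "real \<Rightarrow> 'a set set \<Rightarrow> 'a set \<Rightarrow> 'a set \<Rightarrow> 'a set \<Rightarrow> bool" where
  "eps_regular \<epsilon> E A B C \<longleftrightarrow> A \<noteq> {} \<and> B \<noteq> {} \<and> C \<noteq> {} \<and>
     (\<forall>A' B' C'. A' \<subseteq> A \<and> B' \<subseteq> B \<and> C' \<subseteq> C \<and>
        real (card A') \<ge> \<epsilon> * real (card A) \<and> real (card B') \<ge> \<epsilon> * real (card B) \<and>
        real (card C') \<ge> \<epsilon> * real (card C) \<longrightarrow>
        \<bar>density E A B C - density E A' B' C'\<bar> \<le> \<epsilon>)"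

end

theory Submission
  imports Defs
begin

lemma two_in:
  assumes "card e = 3" "card (e \<inter> Y) \<le> 1" "e = {x,y,z}" "x \<in> Y" "y \<in> Y"
  shows False
proof (cases "x = y")
  case True
  then have "e = {x,z}" using assms(3) by auto
  then have "card e \<le> 2" by (simp add: card_insert_le_m1)
  then show False using assms(1) by simp
next
  case False
  have fin: "finite e" using assms(1) card.infinite by fastforce
  have "{x,y} \<subseteq> e \<inter> Y" using assms by auto
  then have "card {x,y} \<le> card (e \<inter> Y)" using fin by (intro card_mono) auto
  then show False using False assms(2) by simp
qed

lemma dens0:
  assumes E: "\<forall>e\<in>E. card e = 3 \<and> card (e \<inter> Y) \<le> 1"
    and two: "(A \<subseteq> Y \<and> B \<subseteq> Y) \<or> (A \<subseteq> Y \<and> C \<subseteq> Y) \<or> (B \<subseteq> Y \<and> C \<subseteq> Y)"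
  shows "density E A B C = 0"
proof -
  have "{(x,y,z). x \<in> A \<and> y \<in> B \<and> z \<in> C \<and> {x,y,z} \<in> E} = {}"
  proof (rule ccontr)
    assume "{(x,y,z). x \<in> A \<and> y \<in> B \<and> z \<in> C \<and> {x,y,z} \<in> E} \<noteq> {}"
    then obtain x y z where h: "x \<in> A" "y \<in> B" "z \<in> C" "{x,y,z} \<in> E" by auto
    have c: "card {x,y,z} = 3" "card ({x,y,z} \<inter> Y) \<le> 1" using E h(4) by auto
    show False
      using two
    proof (elim disjE conjE)
      assume "A \<subseteq> Y" "B \<subseteq> Y"
      then show False using two_in[OF c, of x y z] h by auto
    next
      assume "A \<subseteq> Y" "C \<subseteq> Y"
      then show False using two_in[OF c, of x z y] h by auto
    next
      assume "B \<subseteq> Y" "C \<subseteq> Y"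
      then show False using two_in[OF c, of y z x] h by auto
    qed
  qed
  then show ?thesis unfolding density_def by (simp only: card.empty)
qed

lemma card3:
  assumes "finite D" "D \<subseteq> X 1 \<union> X 2 \<union> X 3"
    "X 1 \<inter> X 2 = {}" "X 1 \<inter> X 3 = {}" "X 2 \<inter> X 3 = {}"
  shows "card D = card (D \<inter> X 1) + card (D \<inter> X 2) + card (D \<inter> X (3::nat))"
proof -
  have "D = (D \<inter> X 1) \<union> (D \<inter> X 2) \<union> (D \<inter> X 3)" using assms(2) by auto
  then have "card D = card ((D \<inter> X 1) \<union> (D \<inter> X 2) \<union> (D \<inter> X 3))" by simp
  also have "\<dots> = card ((D \<inter> X 1) \<union> (D \<inter> X 2)) + card (D \<inter> X 3)"
    using assms by (intro card_Un_disjoint) auto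
  also have "card ((D \<inter> X 1) \<union> (D \<inter> X 2)) = card (D \<inter> X 1) + card (D \<inter> X 2)"
    using assms by (intro card_Un_disjoint) auto
  finally show ?thesis .
qed

theorem lemma5p2:
  fixes \<epsilon> :: real and V :: "'a set" and E :: "'a set set"
    and X :: "nat \<Rightarrow> 'a set" and D :: "nat \<Rightarrow> 'a set"
  assumes "0 < \<epsilon>" and "\<epsilon> < 1/3"
    and "three_partite V E X"
    and "D 1 \<subseteq> V" and "D 2 \<subseteq> V" and "D 3 \<subseteq> V"
    and "eps_regular \<epsilon> E (D 1) (D 2) (D 3)"
  shows "density E (D 1) (D 2) (D 3) \<le> \<epsilon> \<or>
         (\<exists>f. f ` {1,2,3} \<subseteq> {1,2,3} \<and> inj_on f {1,2,3} \<and>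
              (\<forall>i\<in>{1,2,3::nat}. real (card (D i \<inter> X (f i))) \<ge> (1 - 2*\<epsilon>) * real (card (D i))))"
proof (cases "density E (D 1) (D 2) (D 3) \<le> \<epsilon>")
  case True then show ?thesis by simp
next
  case False
  then have nd: "\<not> density E (D 1) (D 2) (D 3) \<le> \<epsilon>" .
  have tp: "finite V" "V = X 1 \<union> X 2 \<union> X 3" "X 1 \<inter> X 2 = {}" "X 1 \<inter> X 3 = {}" "X 2 \<inter> X 3 = {}"
    "\<forall>e\<in>E. card e = 3 \<and> (\<forall>i\<in>{1,2,3}. card (e \<inter> X i) \<le> 1)"
    using assms(3) unfolding three_partite_def three_graph_def by auto
  have reg: "\<And>A' B' C'. A' \<subseteq> D 1 \<Longrightarrow> B' \<subseteq> D 2 \<Longrightarrow> C' \<subseteq> D 3 \<Longrightarrow>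
        real (card A') \<ge> \<epsilon> * real (card (D 1)) \<Longrightarrow> real (card B') \<ge> \<epsilon> * real (card (D 2)) \<Longrightarrow>
        real (card C') \<ge> \<epsilon> * real (card (D 3)) \<Longrightarrow>
        \<bar>density E (D 1) (D 2) (D 3) - density E A' B' C'\<bar> \<le> \<epsilon>"
    using assms(7) unfolding eps_regular_def by blast
  define big where "big i j \<longleftrightarrow> real (card (D i \<inter> X j)) \<ge> \<epsilon> * real (card (D i))" for i j
  have Dsub: "D i \<subseteq> X 1 \<union> X 2 \<union> X 3" "finite (D i)" if "i \<in> {1,2,3}" for i
    using that assms(4-6) tp(1,2) by (auto intro: finite_subset)
  have cardD: "card (D i) = card (D i \<inter> X 1) + card (D i \<inter> X 2) + card (D i \<inter> X 3)"
    if "i \<in> {1,2,3}" for i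
    using card3[OF Dsub(2)[OF that] Dsub(1)[OF that] tp(3-5)] .
  have ex: "\<exists>j\<in>{1,2,3}. big i j" if "i \<in> {1,2,3}" for i
  proof (rule ccontr)
    assume "\<not> ?thesis"
    then have "real (card (D i \<inter> X 1)) + real (card (D i \<inter> X 2)) + real (card (D i \<inter> X 3))
        < 3 * (\<epsilon> * real (card (D i)))" unfolding big_def by auto
    also have "\<dots> \<le> real (card (D i))" proof -
      have "(3 * \<epsilon>) * real (card (D i)) \<le> 1 * real (card (D i))"
        using assms(2) by (intro mult_right_mono) auto
      then show ?thesis by simp
    qed
    finally show False using cardD[OF that] by simp
  qed
  have dist: "a \<noteq> b \<and> a \<noteq> c \<and> b \<noteq> c"
    if "a \<in> {1,2,3}" "b \<in> {1,2,3}" "c \<in> {1,2,3}" "big 1 a" "big 2 b" "big 3 c" for a b c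
  proof (rule ccontr)
    assume nd2: "\<not> ?thesis"
    have E': "\<forall>e\<in>E. card e = 3 \<and> card (e \<inter> X j) \<le> 1" if "j \<in> {1,2,3}" for j
      using tp(6) that by blast
    have "density E (D 1 \<inter> X a) (D 2 \<inter> X b) (D 3 \<inter> X c) = 0"
      using nd2
    proof (simp only: de_Morgan_conj not_not, elim disjE)
      assume "a = b" then show ?thesis using dens0[OF E'[OF that(1)]] by auto
    next
      assume "a = c" then show ?thesis using dens0[OF E'[OF that(1)]] by auto
    next
      assume "b = c" then show ?thesis using dens0[OF E'[OF that(2)]] by auto
    qed
    moreover have "\<bar>density E (D 1) (D 2) (D 3) - density E (D 1 \<inter> X a) (D 2 \<inter> X b) (D 3 \<inter> X c)\<bar> \<le> \<epsilon>"
      using that(4-6) unfolding big_def by (intro reg) auto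
    ultimately show False using nd by simp
  qed
  obtain a where a: "a \<in> {1,2,3}" "big 1 a" using ex by auto
  obtain b where b: "b \<in> {1,2,3}" "big 2 b" using ex by auto
  obtain c where c: "c \<in> {1,2,3}" "big 3 c" using ex by auto
  have abc: "a \<noteq> b" "a \<noteq> c" "b \<noteq> c" using dist[OF a(1) b(1) c(1) a(2) b(2) c(2)] by auto
  define f where "f i = (if i = 1 then a else if i = 2 then b else c)" for i :: nat
  have notbig: "\<not> big i j" if "i \<in> {1,2,3}" "j \<in> {1,2,3}" "j \<noteq> f i" for i j
  proof
    assume bj: "big i j"
    show False
    proof (cases "i = 1")
      case True
      then show ?thesis using dist[OF that(2) b(1) c(1) _ b(2) c(2)] bj that a(1) b(1) c(1) abc
        unfolding f_def by auto
    next
      case False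
      show ?thesis
      proof (cases "i = 2")
        case True
        then show ?thesis using dist[OF a(1) that(2) c(1) a(2) _ c(2)] bj that a(1) b(1) c(1) abc
          unfolding f_def by auto
      next
        case False
        then have "i = 3" using \<open>i \<noteq> 1\<close> that(1) by auto
        then show ?thesis using dist[OF a(1) b(1) that(2) a(2) b(2)] bj that a(1) b(1) c(1) abc
          \<open>i \<noteq> 1\<close> False unfolding f_def by auto
      qed
    qed
  qed
  show ?thesis
  proof -
    have A1: "f ` {1,2,3} \<subseteq> {1,2,3}" using a b c unfolding f_def by auto
    have A2: "inj_on f {1,2,3}" using abc unfolding f_def inj_on_def by auto
    have A3: "real (card (D i \<inter> X (f i))) \<ge> (1 - 2*\<epsilon>) * real (card (D i))" if i: "i \<in> {1,2,3}" for i
    proof -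
    have fi: "f i \<in> {1,2,3}" using a b c unfolding f_def by auto
    have nb: "real (card (D i \<inter> X j)) < \<epsilon> * real (card (D i))" if "j \<in> {1,2,3}" "j \<noteq> f i" for j
      using notbig[OF i that] unfolding big_def by auto
    have cd: "real (card (D i)) = real (card (D i \<inter> X 1)) + real (card (D i \<inter> X 2)) + real (card (D i \<inter> X 3))"
      using cardD[OF i] by simp
    have "f i = 1 \<or> f i = 2 \<or> f i = 3" using fi by auto
    then show ?thesis
    proof (elim disjE)
      assume h: "f i = 1"
      show ?thesis using nb[of 2] nb[of 3] h cd by (auto simp: algebra_simps)
    next
      assume h: "f i = 2"
      show ?thesis using nb[of 1] nb[of 3] h cd by (auto simp: algebra_simps)
    next
      assume h: "f i = 3"
      show ?thesis using nb[of 1] nb[of 2] h cd by (auto simp: algebra_simps)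
    qed
    qed
    show ?thesis using A1 A2 A3 by blast
  qed
qed

end
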